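(* Let $S$ be a (Hausdorff) topological semigroup such that $S\times S$ is countably compact. Then $S$ does not contain a subsemigroup isomorphic to the semigroup $B_\omega$ of $\omega\times\omega$-matrix units.
   Context: A topological semigroup is a Hausdorff space with a continuous associative multiplication. For a nonzero cardinal $\lambda$, the semigroup of $\lambda\times\lambda$-matrix units is $B_\lambda=(\lambda\times\lambda)\cup\{0\}$ with $(a,b)\cdot(c,d)=(a,d)$ if $b=c$, $(a,b)\cdot(c,d)=0$ if $b\neq c$, and $0$ a zero element. $\omega$ is the first infinite cardinal. *)

theory Defs
  imports "HOL-Analysis.Analysis"
begin

text \<open>The semigroup B_omega of omega x omega matrix units: elements are
  Some (a,b) for the matrix unit (a,b) with a b natural numbers, and None for zero.\<close>

type_synonym B_omega = "(nat \<times> nat) option"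

fun B_mult :: "B_omega \<Rightarrow> B_omega \<Rightarrow> B_omega" where
  "B_mult (Some (a, b)) (Some (c, d)) = (if b = c then Some (a, d) else None)"
| "B_mult _ _ = None"

text \<open>S contains a subsemigroup isomorphic to B_omega iff there is an injective
  semigroup homomorphism from B_omega into S (its image is the subsemigroup).\<close>

definition contains_B_omega :: "('a::semigroup_mult) set \<Rightarrow> bool" where
  "contains_B_omega S \<longleftrightarrow>
     (\<exists>h :: B_omega \<Rightarrow> 'a. inj h \<and> range h \<subseteq> S \<and>
        (\<forall>x y. h (B_mult x y) = h x * h y))"

end

theory Submission
  imports Defs
begin

lemma Int_range_helper: "(C::('a\<times>'b) set) \<inter> range p = p ` {n. p n \<in> C}" by blast

theorem theorem3:
  assumes "continuous_on UNIV (\<lambda>p::'a::{t2_space, semigroup_mult} \<times> 'a. fst p * snd p)"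
    and "countably_compact (UNIV :: ('a \<times> 'a) set)"
  shows "\<not> contains_B_omega (UNIV :: 'a set)"
proof
  assume "contains_B_omega (UNIV :: 'a set)"
  then obtain h :: "B_omega \<Rightarrow> 'a" where inj: "inj h" and hom: "\<And>x y. h (B_mult x y) = h x * h y"
    unfolding contains_B_omega_def by blast
  define f where "f = (\<lambda>p::'a \<times> 'a. fst p * snd p)"
  define p where "p = (\<lambda>n::nat. (h (Some (0, n)), h (Some (n, 0))))"
  have injp: "inj p" unfolding p_def using inj by (auto simp: inj_def)
  have "infinite (range p)" using injp by (simp add: range_inj_infinite)
  then obtain q where q: "\<forall>U. q \<in> U \<and> open U \<longrightarrow> infinite (U \<inter> range p)"
    using countably_compact_imp_acc_point[OF assms(2), of "range p"] by auto
  define z where "z = h None"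
  define e where "e = h (Some (0,0))"
  have ez: "e \<noteq> z" unfolding e_def z_def using inj by (auto simp: inj_def)
  obtain W where W: "open W" "f q \<in> W" "\<not> (e \<in> W \<and> z \<in> W)"
  proof (cases "f q = e")
    case True
    show ?thesis by (rule that[of "- {z}"]) (use True ez in auto)
  next
    case False
    show ?thesis by (rule that[of "- {e}"]) (use False in auto)
  qed
  have "open (f -` W)"
    using assms(1) W(1) unfolding f_def by (simp add: continuous_on_open_vimage)
  moreover have "q \<in> f -` W" using W by simp
  ultimately obtain A B where AB: "open A" "open B" "q \<in> A \<times> B" "A \<times> B \<subseteq> f -` W"
    by (rule open_prod_elim)
  have "open (A \<times> B)" using AB by (simp add: open_Times)
  then have inf: "infinite (A \<times> B \<inter> range p)" using spec[OF q, of "A \<times> B"] AB(3) by simp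
  define N where "N = {n. p n \<in> A \<times> B}"
  have "A \<times> B \<inter> range p = p ` N" unfolding N_def by (rule Int_range_helper)
  then have "infinite N" using inf by auto
  then have "N \<noteq> {}" by auto
  then obtain n1 where n1: "n1 \<in> N" by blast
  have "infinite (N - {n1})" using \<open>infinite N\<close> by (simp add: infinite_remove)
  then have "N - {n1} \<noteq> {}" by (metis finite.emptyI)
  then obtain n2 where n2: "n2 \<in> N" "n2 \<noteq> n1" by blast
  have a1: "h (Some (0, n1)) \<in> A" "h (Some (n1, 0)) \<in> B" using n1 unfolding N_def p_def by auto
  have b2: "h (Some (n2, 0)) \<in> B" using n2 unfolding N_def p_def by auto
  have f1: "f (h (Some (0, n1)), h (Some (n1, 0))) \<in> W" using a1 AB(4) by blast
  have eW: "e \<in> W" using f1 unfolding f_def e_def using hom[of "Some (0,n1)" "Some (n1,0)"] by simp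
  have f2: "f (h (Some (0, n1)), h (Some (n2, 0))) \<in> W" using a1 b2 AB(4) by blast
  have zW: "z \<in> W" using f2 unfolding f_def z_def using hom[of "Some (0,n1)" "Some (n2,0)"] n2 by simp
  show False using W(3) eW zW by blast
qed

end
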